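(* Let $X$ be a finite set with similarity function $S$, and suppose the target clustering $\mathcal{C}^{\ast}$ satisfies stability with respect to $S$. Let $C_i,C_j$ be disjoint nonempty subsets of $X$ such that some target cluster meets both $C_i$ and $C_j$. If the unrestricted merge procedure (described below) applied to $C_i,C_j$ outputs the single cluster $C_i\cup C_j$, then there is a target cluster $C^{\ast}_l$ with $C_i\subseteq C^{\ast}_l$ and $C_j\subseteq C^{\ast}_l$.
   Context: For nonempty $A,A'\subseteq X$, $S(A,A')$ is the average of $S(x,y)$ over $x\in A,y\in A'$. $\mathcal{C}^{\ast}=\{C^{\ast}_1,\dots,C^{\ast}_k\}$ satisfies stability w.r.t. $S$ if for all $i\neq j$, every nonempty proper $A\subset C^{\ast}_i$ and nonempty $A'\subseteq C^{\ast}_j$: $S(A,C^{\ast}_i\setminus A)>S(A,A')$. Average-linkage tree $T_{glob}$ of $X$: leaves are singletons; repeatedly merge the two current nodes $N_1,N_2$ with largest $S(N_1,N_2)$ (ties arbitrary) into parent $N_1\cup N_2$ until the root $X$ remains. Split$(Y)$ for $|Y|\ge2$: let $N$ be the deepest node of $T_{glob}$ containing $Y$, with children $N_1,N_2$; output $Y\cap N_1$, $Y\cap N_2$. Unrestricted merge procedure on $C_i,C_j$: let $C'_i,C'_j$ be the output of Split$(C_i\cup C_j)$; if $\{C'_i,C'_j\}=\{C_i,C_j\}$ output the single cluster $C_i\cup C_j$, otherwise output the two clusters $C'_i,C'_j$. *)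

theory Defs
  imports Complex_Main
begin

definition avg_sim :: "('a \<Rightarrow> 'a \<Rightarrow> real) \<Rightarrow> 'a set \<Rightarrow> 'a set \<Rightarrow> real" where
  "avg_sim S A B = (\<Sum>x\<in>A. \<Sum>y\<in>B. S x y) / (real (card A) * real (card B))"

definition is_clustering :: "'a set \<Rightarrow> 'a set set \<Rightarrow> bool" where
  "is_clustering X CC \<longleftrightarrow> \<Union>CC = X \<and> (\<forall>C\<in>CC. C \<noteq> {}) \<and>
     (\<forall>C\<in>CC. \<forall>D\<in>CC. C \<noteq> D \<longrightarrow> C \<inter> D = {})"

definition stable :: "('a \<Rightarrow> 'a \<Rightarrow> real) \<Rightarrow> 'a set set \<Rightarrow> bool" where
  "stable S CC \<longleftrightarrow> (\<forall>Ci\<in>CC. \<forall>Cj\<in>CC. Ci \<noteq> Cj \<longrightarrow>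
      (\<forall>A A'. A \<noteq> {} \<and> A \<subset> Ci \<and> A' \<noteq> {} \<and> A' \<subseteq> Cj \<longrightarrow>
          avg_sim S A (Ci - A) > avg_sim S A A'))"

text \<open>A state consists of the current nodes P and the
  merges performed so far, recorded as triples (parent, child1, child2).
  Ties are broken arbitrarily (any maximising pair may be merged).\<close>
inductive al_run :: "('a \<Rightarrow> 'a \<Rightarrow> real) \<Rightarrow> 'a set \<Rightarrow> 'a set set \<Rightarrow>
    ('a set \<times> 'a set \<times> 'a set) set \<Rightarrow> bool" for S X where
  init: "al_run S X ((\<lambda>x. {x}) ` X) {}"
| step: "al_run S X P T \<Longrightarrow> N1 \<in> P \<Longrightarrow> N2 \<in> P \<Longrightarrow> N1 \<noteq> N2 \<Longrightarrow>
     (\<forall>M1\<in>P. \<forall>M2\<in>P. M1 \<noteq> M2 \<longrightarrow> avg_sim S M1 M2 \<le> avg_sim S N1 N2) \<Longrightarrow>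
     al_run S X (insert (N1 \<union> N2) (P - {N1, N2})) (insert (N1 \<union> N2, N1, N2) T)"

definition avg_linkage_tree :: "('a \<Rightarrow> 'a \<Rightarrow> real) \<Rightarrow> 'a set \<Rightarrow>
    ('a set \<times> 'a set \<times> 'a set) set \<Rightarrow> bool" where
  "avg_linkage_tree S X T \<longleftrightarrow> al_run S X {X} T"

definition tree_nodes :: "'a set \<Rightarrow> ('a set \<times> 'a set \<times> 'a set) set \<Rightarrow> 'a set set" where
  "tree_nodes X T = ((\<lambda>x. {x}) ` X) \<union> fst ` T"

text \<open>Split(Y) w.r.t. tree T outputs (A, B): N is the deepest node containing Y
  (the smallest such node; nodes form a laminar tree), with children N1, N2.\<close>
definition split_out :: "'a set \<Rightarrow> ('a set \<times> 'a set \<times> 'a set) set \<Rightarrow> 'a set \<Rightarrow>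
    'a set \<Rightarrow> 'a set \<Rightarrow> bool" where
  "split_out X T Y A B \<longleftrightarrow> (\<exists>N N1 N2. N \<in> tree_nodes X T \<and> Y \<subseteq> N \<and>
      (\<forall>M\<in>tree_nodes X T. Y \<subseteq> M \<longrightarrow> N \<subseteq> M) \<and>
      (N, N1, N2) \<in> T \<and> A = Y \<inter> N1 \<and> B = Y \<inter> N2)"

end

theory Submission
  imports Defs
begin

lemma avg_lt:
  fixes S :: "'a \<Rightarrow> 'a \<Rightarrow> real"
  assumes "finite A" "A \<noteq> {}" "finite F" "F \<noteq> {}" "\<forall>B\<in>F. finite B \<and> B \<noteq> {}"
    "\<forall>B1\<in>F. \<forall>B2\<in>F. B1 \<noteq> B2 \<longrightarrow> B1 \<inter> B2 = {}" "\<forall>B\<in>F. avg_sim S A B < c"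
  shows "avg_sim S A (\<Union>F) < c"
proof -
  define g where "g B = (\<Sum>x\<in>A. \<Sum>y\<in>B. S x y)" for B
  have lt: "g B < c * real (card A) * real (card B)" if "B\<in>F" for B
  proof -
    have pos: "real (card A) * real (card B) > 0" using assms that by (simp add: card_gt_0_iff)
    from assms(7) that have "g B / (real (card A) * real (card B)) < c" by (simp add: avg_sim_def g_def)
    thus ?thesis using pos by (simp add: divide_less_eq mult.assoc)
  qed
  have "g (\<Union>F) = (\<Sum>x\<in>A. \<Sum>B\<in>F. \<Sum>y\<in>B. S x y)"
    unfolding g_def using assms(5,6) by (simp add: sum.Union_disjoint)
  also have "\<dots> = (\<Sum>B\<in>F. g B)" unfolding g_def by (rule sum.swap)
  also have "\<dots> < (\<Sum>B\<in>F. c * real (card A) * real (card B))"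
    by (rule sum_strict_mono[OF assms(3,4)]) (rule lt)
  also have "\<dots> = c * real (card A) * real (card (\<Union>F))"
  proof -
    have "card (\<Union>F) = sum card F"
      by (rule card_Union_disjoint) (use assms(5,6) in \<open>auto simp: pairwise_def disjnt_def\<close>)
    thus ?thesis by (simp add: sum_distrib_left)
  qed
  finally have 1: "g (\<Union>F) < c * real (card A) * real (card (\<Union>F))" .
  have "finite (\<Union>F)" "\<Union>F \<noteq> {}" using assms by auto
  hence pos: "real (card A) * real (card (\<Union>F)) > 0" using assms by (simp add: card_gt_0_iff)
  show ?thesis using 1 pos unfolding avg_sim_def g_def[symmetric]
    by (simp add: divide_less_eq mult.assoc)
qed

lemma avg_sym:
  assumes "\<forall>x y. S x y = S y x"
  shows "avg_sim S A B = avg_sim S B A"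
  unfolding avg_sim_def using assms
  by (subst sum.swap) (simp add: mult.commute)

definition lam :: "'a set set \<Rightarrow> 'a set \<Rightarrow> bool" where
  "lam CC M \<longleftrightarrow> (\<forall>C\<in>CC. M \<subseteq> C \<or> C \<subseteq> M \<or> M \<inter> C = {})"

definition invP :: "'a set \<Rightarrow> 'a set set \<Rightarrow> 'a set set \<Rightarrow> bool" where
  "invP X CC P \<longleftrightarrow> \<Union>P = X \<and> (\<forall>M\<in>P. M \<noteq> {} \<and> lam CC M) \<and>
     (\<forall>M\<in>P. \<forall>M'\<in>P. M \<noteq> M' \<longrightarrow> M \<inter> M' = {})"

lemma stableD: "stable S CC \<Longrightarrow> Ci\<in>CC \<Longrightarrow> Cj\<in>CC \<Longrightarrow> Ci\<noteq>Cj \<Longrightarrow> A\<noteq>{} \<Longrightarrow> A\<subset>Ci \<Longrightarrow> A'\<noteq>{} \<Longrightarrow> A'\<subseteq>Cj \<Longrightarrow> avg_sim S A A' < avg_sim S A (Ci - A)"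
  unfolding stable_def by blast

lemma core:
  fixes S :: "'a \<Rightarrow> 'a \<Rightarrow> real"
  assumes fin: "finite X" and clus: "is_clustering X CC" and st: "stable S CC"
    and inv: "invP X CC P" and AP: "A \<in> P" and BP: "B \<in> P" and AB: "A \<noteq> B"
    and mx: "\<forall>M\<in>P. M \<noteq> A \<longrightarrow> avg_sim S A M \<le> avg_sim S A B"
    and CCC: "C \<in> CC" and AC: "A \<subset> C" and BC: "B \<inter> C = {}"
  shows False
proof -
  define c where "c = avg_sim S A (C - A)"
  have UCC: "\<Union>CC = X" using clus by (simp add: is_clustering_def)
  have UP: "\<Union>P = X" using inv by (simp add: invP_def)
  have "CC \<subseteq> Pow X" using UCC by auto
  hence finCC: "finite CC" using fin by (simp add: finite_subset)
  have "P \<subseteq> Pow X" using UP by auto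
  hence finP: "finite P" using fin by (simp add: finite_subset)
    have Ane: "A \<noteq> {}" using inv AP by (simp add: invP_def)
  have Bne: "B \<noteq> {}" using inv BP by (simp add: invP_def)
  have AX: "A \<subseteq> X" using UP AP by auto
  have BX: "B \<subseteq> X" using UP BP by auto
  have CX: "C \<subseteq> X" using UCC CCC by auto
  have finA: "finite A" using AX fin by (rule finite_subset)
  have finB: "finite B" using BX fin by (rule finite_subset)
  have disjP: "\<And>M M'. M \<in> P \<Longrightarrow> M' \<in> P \<Longrightarrow> M \<noteq> M' \<Longrightarrow> M \<inter> M' = {}"
    using inv by (simp add: invP_def)
  have disjCC: "\<And>D D'. D \<in> CC \<Longrightarrow> D' \<in> CC \<Longrightarrow> D \<noteq> D' \<Longrightarrow> D \<inter> D' = {}"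
    using clus by (simp add: is_clustering_def)
  have s1: "avg_sim S A B < c"
  proof -
    define F where "F = (\<lambda>D. B \<inter> D) ` {D\<in>CC. B \<inter> D \<noteq> {}}"
    have UF: "\<Union>F = B"
    proof
      show "\<Union>F \<subseteq> B" unfolding F_def by blast
      show "B \<subseteq> \<Union>F"
      proof
        fix x assume "x \<in> B"
        then obtain D where "D \<in> CC" "x \<in> D" using BX UCC by blast
        thus "x \<in> \<Union>F" unfolding F_def using \<open>x \<in> B\<close> by blast
      qed
    qed
    have "avg_sim S A (\<Union>F) < c"
    proof (rule avg_lt)
      show "finite A" by fact
      show "A \<noteq> {}" by fact
      show "finite F" unfolding F_def using finCC by simp
      show "F \<noteq> {}" using UF Bne by auto
      show "\<forall>B\<in>F. finite B \<and> B \<noteq> {}" unfolding F_def using finB by auto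
      show "\<forall>B1\<in>F. \<forall>B2\<in>F. B1 \<noteq> B2 \<longrightarrow> B1 \<inter> B2 = {}"
      proof (intro ballI impI)
        fix B1 B2 assume "B1 \<in> F" "B2 \<in> F" "B1 \<noteq> B2"
        then obtain D1 D2 where "D1 \<in> CC" "D2 \<in> CC" "B1 = B \<inter> D1" "B2 = B \<inter> D2"
          unfolding F_def by auto
        moreover have "D1 \<noteq> D2" using calculation \<open>B1 \<noteq> B2\<close> by auto
        ultimately show "B1 \<inter> B2 = {}" using disjCC by auto
      qed
      show "\<forall>B'\<in>F. avg_sim S A B' < c"
      proof
        fix B' assume "B' \<in> F"
        then obtain D where D: "D \<in> CC" "B \<inter> D \<noteq> {}" "B' = B \<inter> D" unfolding F_def by auto
        have "C \<noteq> D" using D BC by auto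
        have "avg_sim S A (B \<inter> D) < avg_sim S A (C - A)"
          by (rule stableD[OF st CCC D(1) \<open>C \<noteq> D\<close> Ane AC D(2) Int_lower2])
        thus "avg_sim S A B' < c" using D(3) c_def by simp
      qed
    qed
    thus ?thesis using UF by simp
  qed
  define G where "G = {M\<in>P. M \<subseteq> C \<and> M \<noteq> A}"
  have UG: "\<Union>G = C - A"
  proof
    show "\<Union>G \<subseteq> C - A" unfolding G_def using disjP AP by blast
    show "C - A \<subseteq> \<Union>G"
    proof
      fix x assume x: "x \<in> C - A"
      then obtain M where M: "M \<in> P" "x \<in> M" using CX UP by blast
      have "M \<noteq> A" using x M by auto
      have "lam CC M" using inv M by (simp add: invP_def)
      hence "M \<subseteq> C \<or> C \<subseteq> M \<or> M \<inter> C = {}" using CCC by (simp add: lam_def)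
      moreover have "\<not> C \<subseteq> M" using disjP[OF M(1) AP \<open>M \<noteq> A\<close>] AC Ane by blast
      ultimately have "M \<subseteq> C" using x M by blast
      thus "x \<in> \<Union>G" using M \<open>M \<noteq> A\<close> unfolding G_def by blast
    qed
  qed
  have "\<exists>M\<in>G. \<not> avg_sim S A M < c"
  proof (rule ccontr)
    assume "\<not> ?thesis"
    hence "avg_sim S A (\<Union>G) < c"
    proof (intro avg_lt)
      show "finite A" by fact
      show "A \<noteq> {}" by fact
      show "finite G" unfolding G_def using finP by simp
      show "G \<noteq> {}" using UG AC by auto
      show "\<forall>B\<in>G. finite B \<and> B \<noteq> {}"
      proof
        fix M assume "M \<in> G"
        hence M: "M \<in> P" unfolding G_def by simp
        hence "M \<subseteq> X" using UP by auto
        moreover have "M \<noteq> {}" using inv M by (simp add: invP_def)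
        ultimately show "finite M \<and> M \<noteq> {}" using fin by (simp add: finite_subset)
      qed
      show "\<forall>B1\<in>G. \<forall>B2\<in>G. B1 \<noteq> B2 \<longrightarrow> B1 \<inter> B2 = {}" unfolding G_def using disjP by blast
    qed auto
    thus False using UG c_def by simp
  qed
  then obtain M where "M \<in> G" "c \<le> avg_sim S A M" by (meson not_less)
  moreover have "avg_sim S A M \<le> avg_sim S A B" using mx \<open>M \<in> G\<close> unfolding G_def by blast
  ultimately show False using s1 by linarith
qed

definition invT :: "'a set set \<Rightarrow> ('a set \<times> 'a set \<times> 'a set) set \<Rightarrow> bool" where
  "invT CC T \<longleftrightarrow> (\<forall>N A B. (N, A, B) \<in> T \<longrightarrow> N = A \<union> B \<and> A \<inter> B = {} \<and> lam CC A \<and> lam CC B)"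

lemma run_inv:
  fixes S :: "'a \<Rightarrow> 'a \<Rightarrow> real"
  assumes run: "al_run S X P T" and fin: "finite X" and sym: "\<forall>x y. S x y = S y x"
    and clus: "is_clustering X CC" and st: "stable S CC"
  shows "invP X CC P \<and> invT CC T"
  using run
proof (induction rule: al_run.induct)
  case init
  have "lam CC {x}" for x unfolding lam_def by auto
  thus ?case unfolding invP_def invT_def by auto
next
  case (step P T N1 N2)
  have ip: "invP X CC P" and it: "invT CC T" using step.IH by auto
  have d12: "N1 \<inter> N2 = {}" using ip step.hyps by (simp add: invP_def)
  have l1: "lam CC N1" and l2: "lam CC N2" using ip step.hyps by (auto simp: invP_def)
  have mx1: "\<forall>M\<in>P. M \<noteq> N1 \<longrightarrow> avg_sim S N1 M \<le> avg_sim S N1 N2"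
    using step.hyps by blast
  have mx2: "\<forall>M\<in>P. M \<noteq> N2 \<longrightarrow> avg_sim S N2 M \<le> avg_sim S N2 N1"
    using step.hyps avg_sym[OF sym] by metis
  have ne1: "N1 \<noteq> {}" and ne2: "N2 \<noteq> {}" using ip step.hyps by (auto simp: invP_def)
  have lN: "lam CC (N1 \<union> N2)"
    unfolding lam_def
  proof
    fix C assume C: "C \<in> CC"
    have a: "N1 \<subseteq> C \<or> C \<subseteq> N1 \<or> N1 \<inter> C = {}" using l1 C by (simp add: lam_def)
    have b: "N2 \<subseteq> C \<or> C \<subseteq> N2 \<or> N2 \<inter> C = {}" using l2 C by (simp add: lam_def)
    have n1: "N1 \<subseteq> C \<Longrightarrow> N2 \<inter> C = {} \<Longrightarrow> N1 = C"
    proof (rule ccontr)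
      assume h: "N1 \<subseteq> C" "N2 \<inter> C = {}" "N1 \<noteq> C"
      hence "N1 \<subset> C" by (rule_tac psubsetI)
      show False by (rule core[OF fin clus st ip step.hyps(2,3,4) mx1 C \<open>N1 \<subset> C\<close> h(2)])
    qed
    have n2: "N2 \<subseteq> C \<Longrightarrow> N1 \<inter> C = {} \<Longrightarrow> N2 = C"
    proof (rule ccontr)
      assume h: "N2 \<subseteq> C" "N1 \<inter> C = {}" "N2 \<noteq> C"
      hence "N2 \<subset> C" by (rule_tac psubsetI)
      show False by (rule core[OF fin clus st ip step.hyps(3,2) step.hyps(4)[symmetric] mx2 C \<open>N2 \<subset> C\<close> h(2)])
    qed
    show "N1 \<union> N2 \<subseteq> C \<or> C \<subseteq> N1 \<union> N2 \<or> (N1 \<union> N2) \<inter> C = {}"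
      using a b n1 n2 by auto
  qed
  have hU: "\<Union>P = X" and hp: "\<forall>M\<in>P. M \<noteq> {} \<and> lam CC M"
    and d: "\<forall>M\<in>P. \<forall>M'\<in>P. M \<noteq> M' \<longrightarrow> M \<inter> M' = {}"
    using ip unfolding invP_def by simp_all
  have "invP X CC (insert (N1 \<union> N2) (P - {N1, N2}))"
    unfolding invP_def
  proof (intro conjI)
    have "\<Union>(insert (N1 \<union> N2) (P - {N1, N2})) = \<Union>P" using step.hyps(2,3) by blast
    thus "\<Union>(insert (N1 \<union> N2) (P - {N1, N2})) = X" using hU by simp
    show "\<forall>M\<in>insert (N1 \<union> N2) (P - {N1, N2}). M \<noteq> {} \<and> lam CC M"
      using hp lN ne1 by blast
    have dd: "M \<inter> (N1 \<union> N2) = {}" if "M \<in> P - {N1, N2}" for M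
    proof -
      have "M \<inter> N1 = {}" using d that step.hyps(2) by blast
      moreover have "M \<inter> N2 = {}" using d that step.hyps(3) by blast
      ultimately show ?thesis by blast
    qed
    show "\<forall>M\<in>insert (N1 \<union> N2) (P - {N1, N2}). \<forall>M'\<in>insert (N1 \<union> N2) (P - {N1, N2}).
        M \<noteq> M' \<longrightarrow> M \<inter> M' = {}"
    proof (intro ballI impI)
      fix M M' assume M: "M \<in> insert (N1 \<union> N2) (P - {N1, N2})"
        and M': "M' \<in> insert (N1 \<union> N2) (P - {N1, N2})" and ne: "M \<noteq> M'"
      show "M \<inter> M' = {}"
      proof (cases "M = N1 \<union> N2")
        case True
        hence "M' \<in> P - {N1, N2}" using M' ne by simp
        thus ?thesis using dd True by blast
      next
        case False
        hence Mi: "M \<in> P - {N1, N2}" using M by simp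
        show ?thesis
        proof (cases "M' = N1 \<union> N2")
          case True thus ?thesis using dd Mi by simp
        next
          case False
          hence "M' \<in> P" using M' by simp
          thus ?thesis using d Mi ne by blast
        qed
      qed
    qed
  qed
  moreover have "invT CC (insert (N1 \<union> N2, N1, N2) T)"
    using it d12 l1 l2 unfolding invT_def by auto
  ultimately show ?case by blast
qed

theorem lemma21:
  fixes X :: "'a set" and S :: "'a \<Rightarrow> 'a \<Rightarrow> real" and CC :: "'a set set"
    and T :: "('a set \<times> 'a set \<times> 'a set) set"
    and Ci Cj Ci' Cj' :: "'a set"
  assumes "finite X"
    and "\<forall>x y. S x y = S y x"
    and "is_clustering X CC"
    and "stable S CC"
    and "avg_linkage_tree S X T"
    and "Ci \<subseteq> X" and "Cj \<subseteq> X" and "Ci \<noteq> {}" and "Cj \<noteq> {}" and "Ci \<inter> Cj = {}"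
    and "\<exists>C\<in>CC. C \<inter> Ci \<noteq> {} \<and> C \<inter> Cj \<noteq> {}"
    and "split_out X T (Ci \<union> Cj) Ci' Cj'"
    and "{Ci', Cj'} = {Ci, Cj}"
  shows "\<exists>C\<in>CC. Ci \<subseteq> C \<and> Cj \<subseteq> C"
proof -
  have it: "invT CC T" using run_inv[OF assms(5)[unfolded avg_linkage_tree_def] assms(1-4)] by blast
  obtain N N1 N2 where N: "Ci \<union> Cj \<subseteq> N" "(N, N1, N2) \<in> T" "Ci' = (Ci \<union> Cj) \<inter> N1"
    "Cj' = (Ci \<union> Cj) \<inter> N2"
    using assms(12) unfolding split_out_def by blast
  have NN: "N = N1 \<union> N2" "N1 \<inter> N2 = {}" "lam CC N1" "lam CC N2"
    using it N(2) unfolding invT_def by blast+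
  obtain C where C: "C \<in> CC" "C \<inter> Ci \<noteq> {}" "C \<inter> Cj \<noteq> {}" using assms(11) by blast
  have m1: "C \<inter> N1 \<noteq> {}" and m2: "C \<inter> N2 \<noteq> {}"
    using assms(13) N(3,4) C(2,3) by (auto simp: doubleton_eq_iff)
  have "N1 \<subseteq> C \<or> C \<subseteq> N1 \<or> N1 \<inter> C = {}" using NN(3) C(1) by (simp add: lam_def)
  hence "N1 \<subseteq> C" using m1 m2 NN(2) by blast
  moreover have "N2 \<subseteq> C \<or> C \<subseteq> N2 \<or> N2 \<inter> C = {}" using NN(4) C(1) by (simp add: lam_def)
  hence "N2 \<subseteq> C" using m1 m2 NN(2) by blast
  ultimately show ?thesis using N(1) NN(1) C(1) by blast
qed

end
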